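(* Let $G=(V,E)$ be a finite connected graph (loops allowed) and let $W_0=(G,w^0)$ and $W_1=(G,w^1)$ be two networks on $G$ such that there is a vertex $v\in V$ with $w^0_{v,v}<w^1_{v,v}$, and $w^0_{u,x}=w^1_{u,x}$ for every other edge $(u,x)\neq(v,v)$. Denote by $\gamma^0$ and $\gamma^1$ the spectral gaps of the random walks on $W_0$ and $W_1$ respectively. Then $\gamma^1\le\gamma^0$.
   Context: A network $(G,w)$ is a connected graph with nonnegative edge weights $w$ (including possibly weights $w_{v,v}$ on self-loops). The random walk on it moves from $u$ to $x$ with probability proportional to $w_{u,x}$; its stationary distribution is $\pi(u)=w_u/Z$ with $w_u=\sum_{e\ni u}w_e$ and $Z=\sum_u w_u$. The spectral gap is $1-\lambda_2$, where $\lambda_2$ is the second largest eigenvalue of the (reversible) transition matrix. *)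

theory Defs
  imports "HOL-Analysis.Analysis" "HOL-Computational_Algebra.Polynomial"
begin

text \<open>The underlying graph has an edge
  {u,x} iff w u x > 0; it is required to be connected.\<close>
definition network :: "('a::finite \<Rightarrow> 'a \<Rightarrow> real) \<Rightarrow> bool" where
  "network w \<longleftrightarrow> (\<forall>u x. w u x = w x u) \<and> (\<forall>u x. 0 \<le> w u x) \<and>
     (\<forall>u x. (\<lambda>a b. a \<noteq> b \<and> 0 < w a b)\<^sup>*\<^sup>* u x)"

text \<open>w_u = sum of weights of edges containing u (a loop counted once).\<close>
definition wdeg :: "('a::finite \<Rightarrow> 'a \<Rightarrow> real) \<Rightarrow> 'a \<Rightarrow> real" where
  "wdeg w u = (\<Sum>x\<in>UNIV. w u x)"

definition trans_mat :: "('a::finite \<Rightarrow> 'a \<Rightarrow> real) \<Rightarrow> real^'a^'a" where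
  "trans_mat w = (\<chi> u x. w u x / wdeg w u)"

definition charpoly :: "real^'n^'n \<Rightarrow> real poly" where
  "charpoly A = det (\<chi> i j. (if i = j then [:0, 1:] else 0) - [:A $ i $ j:])"

text \<open>Second largest eigenvalue, counted with (algebraic) multiplicity:
  the largest eigenvalue \<lambda> such that the eigenvalues \<ge> \<lambda> have total multiplicity \<ge> 2.\<close>
definition second_eigenvalue :: "real^'n^'n \<Rightarrow> real" where
  "second_eigenvalue A = Max {l. poly (charpoly A) l = 0 \<and>
      2 \<le> (\<Sum>\<mu>\<in>{\<mu>. poly (charpoly A) \<mu> = 0 \<and> l \<le> \<mu>}. order \<mu> (charpoly A))}"

definition spectral_gap :: "('a::finite \<Rightarrow> 'a \<Rightarrow> real) \<Rightarrow> real" where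
  "spectral_gap w = 1 - second_eigenvalue (trans_mat w)"

end

theory Submission imports Defs begin

lemma sym_inner:
  fixes S :: "real^'n^'n"
  assumes sym: "\<And>i j. S$i$j = S$j$i"
  shows "(S *v x) \<bullet> y = x \<bullet> (S *v y)"
proof -
  have "(S *v x) \<bullet> y = (\<Sum>i\<in>UNIV. (\<Sum>j\<in>UNIV. S$i$j * x$j) * y$i)"
    by (simp add: inner_vec_def matrix_vector_mult_def)
  also have "\<dots> = (\<Sum>i\<in>UNIV. \<Sum>j\<in>UNIV. S$i$j * x$j * y$i)" by (simp add: sum_distrib_right)
  also have "\<dots> = (\<Sum>j\<in>UNIV. \<Sum>i\<in>UNIV. S$i$j * x$j * y$i)" by (rule sum.swap)
  also have "\<dots> = (\<Sum>j\<in>UNIV. x$j * (\<Sum>i\<in>UNIV. S$j$i * y$i))"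
    by (simp add: sum_distrib_left sym mult_ac)
  also have "\<dots> = x \<bullet> (S *v y)" by (simp add: inner_vec_def matrix_vector_mult_def)
  finally show ?thesis .
qed

lemma quad_nonpos:
  fixes a c :: real
  assumes "a \<ge> 0" "\<And>t. 2*t*a + t^2*c \<le> 0"
  shows "a = 0"
proof (rule ccontr)
  assume "a \<noteq> 0" hence ap: "a > 0" using assms by auto
  define t where "t = a / (\<bar>c\<bar> + 1)"
  have tp: "t > 0" using ap by (simp add: t_def)
  have "2*t*a + t^2*c \<le> 0" by (rule assms(2))
  hence "t*(2*a + t*c) \<le> 0" by (simp add: power2_eq_square algebra_simps)
  hence "2*a + t*c \<le> 0" using tp by (simp add: mult_le_0_iff)
  moreover have "t * \<bar>c\<bar> < a" using ap unfolding t_def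
    by (simp add: field_simps)
  moreover have "- (t*\<bar>c\<bar>) \<le> t*c" using tp
    by (metis abs_ge_minus_self abs_mult abs_of_pos minus_le_iff)
  ultimately show False using ap by linarith
qed

lemma spectral_aux:
  fixes S :: "real^'n^'n"
  assumes sym: "\<And>i j. S$i$j = S$j$i"
  shows "k \<le> CARD('n) \<Longrightarrow> \<exists>B. finite B \<and> card B = k \<and>
     (\<forall>b\<in>B. norm b = 1 \<and> (\<exists>m. S *v b = m *\<^sub>R b)) \<and>
     (\<forall>b\<in>B. \<forall>c\<in>B. b \<noteq> c \<longrightarrow> b \<bullet> c = 0)"
proof (induction k)
  case 0 show ?case by (intro exI[of _ "{}"]) auto
next
  case (Suc k)
  then obtain B where Bf: "finite B" and Bc: "card B = k"
     and Be: "\<forall>b\<in>B. norm b = 1 \<and> (\<exists>m. S *v b = m *\<^sub>R b)"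
     and Bo: "\<forall>b\<in>B. \<forall>c\<in>B. b \<noteq> c \<longrightarrow> b \<bullet> c = 0" by auto
  have "dim B < DIM(real^'n)"
    using dim_le_card[OF order.refl Bf] Bc Suc.prems by simp
  then obtain x0 :: "real^'n" where x0: "x0 \<noteq> 0" "\<And>y. y \<in> span B \<Longrightarrow> orthogonal x0 y"
    using orthogonal_to_subspace_exists[OF \<open>dim B < DIM(real^'n)\<close>] by blast
  define W where "W = (\<Inter>b\<in>B. {x::real^'n. b \<bullet> x = 0})"
  have inW: "x \<in> W \<longleftrightarrow> (\<forall>b\<in>B. b \<bullet> x = 0)" for x by (auto simp: W_def)
  have x0W: "x0 \<in> W" using x0(2) span_base unfolding inW orthogonal_def
    by (metis inner_commute)
  have Wsub: "a *\<^sub>R x + c *\<^sub>R y \<in> W" if "x \<in> W" "y \<in> W" for a c x y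
    using that by (simp add: inW inner_add_right)
  have Winv: "S *v x \<in> W" if "x \<in> W" for x
  proof -
    { fix b assume b: "b \<in> B"
      then obtain m where "S *v b = m *\<^sub>R b" using Be by auto
      hence "b \<bullet> (S *v x) = 0" using sym_inner[OF sym, of b x] that b
        by (simp add: inW) }
    thus ?thesis by (simp add: inW)
  qed
  define K where "K = W \<inter> sphere 0 1"
  have "closed W" unfolding W_def by (intro closed_INT ballI closed_hyperplane)
  hence cK: "compact K" unfolding K_def by (intro closed_Int_compact) auto
  moreover have "(1 / norm x0) *\<^sub>R x0 \<in> K"
    using x0 x0W Wsub[of x0 x0 "1/norm x0" 0] by (simp add: K_def)
  hence Kne: "K \<noteq> {}" by auto
  have cont: "continuous_on K (\<lambda>x. x \<bullet> (S *v x))"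
    by (intro continuous_intros)
  obtain x where xK: "x \<in> K" and xmax: "\<And>y. y \<in> K \<Longrightarrow> y \<bullet> (S *v y) \<le> x \<bullet> (S *v x)"
    using continuous_attains_sup[OF cK Kne cont] by blast
  define m where "m = x \<bullet> (S *v x)"
  have xW: "x \<in> W" and xn: "norm x = 1" using xK by (auto simp: K_def)
  have xx: "x \<bullet> x = 1" using xn by (simp add: norm_eq_1)
  have bound: "z \<bullet> (S *v z) \<le> m * (z \<bullet> z)" if "z \<in> W" for z
  proof (cases "z = 0")
    case True thus ?thesis by simp
  next
    case False
    let ?y = "(1 / norm z) *\<^sub>R z"
    have "?y \<in> K" using Wsub[of z z "1/norm z" 0] that False by (simp add: K_def)
    hence "?y \<bullet> (S *v ?y) \<le> m" unfolding m_def by (rule xmax)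
    hence "(z \<bullet> (S *v z)) / (norm z)^2 \<le> m"
      by (simp add: matrix_vector_mult_scaleR power2_eq_square)
    thus ?thesis using False by (simp add: divide_le_eq power2_norm_eq_inner)
  qed
  define r where "r = S *v x - m *\<^sub>R x"
  have rW: "r \<in> W" unfolding r_def using Wsub[of "S *v x" x 1 "-m"] Winv[OF xW] xW by simp
  have rr: "r \<bullet> (S *v x) - m * (r \<bullet> x) = r \<bullet> r"
    unfolding r_def by (simp add: inner_diff_left inner_diff_right inner_commute algebra_simps)
  have "2*t*(r \<bullet> r) + t^2*(r \<bullet> (S *v r) - m * (r \<bullet> r)) \<le> 0" for t
  proof -
    have "x + t *\<^sub>R r \<in> W" using Wsub[OF xW rW, of 1 t] by simp
    from bound[OF this]
    have "(x + t *\<^sub>R r) \<bullet> (S *v (x + t *\<^sub>R r)) \<le> m * ((x + t *\<^sub>R r) \<bullet> (x + t *\<^sub>R r))" .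
    moreover have "x \<bullet> (S *v r) = r \<bullet> (S *v x)" using sym_inner[OF sym, of r x] by (simp add: inner_commute)
    moreover have "(x + t *\<^sub>R r) \<bullet> (S *v (x + t *\<^sub>R r)) =
       x \<bullet> (S *v x) + t * (x \<bullet> (S *v r)) + t * (r \<bullet> (S *v x)) + t^2 * (r \<bullet> (S *v r))"
      by (simp add: matrix_vector_right_distrib matrix_vector_mult_scaleR inner_add_left inner_add_right
          power2_eq_square algebra_simps)
    moreover have "(x + t *\<^sub>R r) \<bullet> (x + t *\<^sub>R r) = x \<bullet> x + 2 * t * (r \<bullet> x) + t^2 * (r \<bullet> r)"
      by (simp add: inner_add_left inner_add_right power2_eq_square inner_commute)
    ultimately have "x \<bullet> (S *v x) + 2 * t * (r \<bullet> (S *v x)) + t^2 * (r \<bullet> (S *v r))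
        \<le> m * (1 + 2 * t * (r \<bullet> x) + t^2 * (r \<bullet> r))" using xx by (simp add: m_def)
    hence "2 * t * (r \<bullet> (S *v x) - m * (r \<bullet> x)) + t^2 * (r \<bullet> (S *v r) - m * (r \<bullet> r)) \<le> 0"
      by (simp add: algebra_simps m_def)
    thus ?thesis using rr by simp
  qed
  moreover have "r \<bullet> (S *v r) - m * (r \<bullet> r) \<le> 0" using bound[OF rW] by simp
  ultimately have "r \<bullet> r = 0" using quad_nonpos[of "r \<bullet> r" "r \<bullet> (S *v r) - m * (r \<bullet> r)"] by simp
  hence eig: "S *v x = m *\<^sub>R x" unfolding r_def by simp
  have xnB: "x \<notin> B" using xW xx by (auto simp: inW)
  show ?case
  proof (intro exI[of _ "insert x B"] conjI)
    show "finite (insert x B)" using Bf by simp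
    show "card (insert x B) = Suc k" using Bf Bc xnB by simp
    show "\<forall>b\<in>insert x B. norm b = 1 \<and> (\<exists>m. S *v b = m *\<^sub>R b)" using Be xn eig by auto
    show "\<forall>b\<in>insert x B. \<forall>c\<in>insert x B. b \<noteq> c \<longrightarrow> b \<bullet> c = 0"
      using Bo xW by (auto simp: inW inner_commute)
  qed
qed


lemma spectral:
  fixes S :: "real^'n^'n"
  assumes sym: "\<And>i j. S$i$j = S$j$i"
  obtains h :: "'n \<Rightarrow> real^'n" and \<mu> :: "'n \<Rightarrow> real"
  where "\<And>i j. h i \<bullet> h j = (if i = j then 1 else 0)" "\<And>i. S *v h i = \<mu> i *\<^sub>R h i"
proof -
  obtain B where Bf: "finite B" and Bc: "card B = CARD('n)"
     and Be: "\<forall>b\<in>B. norm b = 1 \<and> (\<exists>m. S *v b = m *\<^sub>R b)"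
     and Bo: "\<forall>b\<in>B. \<forall>c\<in>B. b \<noteq> c \<longrightarrow> b \<bullet> c = 0"
    using spectral_aux[OF sym, of "CARD('n)"] by auto
  obtain f where f: "bij_betw f (UNIV::'n set) B"
    using finite_same_card_bij[of "UNIV::'n set" B] Bf Bc by auto
  define \<mu> where "\<mu> i = (SOME m. S *v f i = m *\<^sub>R f i)" for i
  have fB: "f i \<in> B" for i using f by (auto simp: bij_betw_def)
  have 1: "f i \<bullet> f j = (if i = j then 1 else 0)" for i j
  proof (cases "i = j")
    case True thus ?thesis using Be fB[of i] by (simp add: norm_eq_1)
  next
    case False
    hence "f i \<noteq> f j" using f by (auto simp: bij_betw_def inj_on_def)
    thus ?thesis using Bo fB False by auto
  qed
  have 2: "S *v f i = \<mu> i *\<^sub>R f i" for i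
    unfolding \<mu>_def using Be fB[of i] by (metis (mono_tags, lifting) someI_ex)
  show ?thesis using that[OF 1 2] .
qed

lemma orth_rows:
  fixes h :: "'n \<Rightarrow> real^'n"
  assumes orth: "\<And>i j. h i \<bullet> h j = (if i = j then 1 else 0)"
  shows "(\<Sum>i\<in>UNIV. h i $ a * h i $ b) = (if a = b then 1 else 0)"
proof -
  define H :: "real^'n^'n" where "H = (\<chi> u i. h i $ u)"
  have e: "(transpose H ** H)$i$j = h i \<bullet> h j" for i j
    by (simp add: H_def matrix_matrix_mult_def transpose_def inner_vec_def)
  have "transpose H ** H = mat 1" by (simp add: vec_eq_iff e orth mat_def)
  hence "H ** transpose H = mat 1" using matrix_left_right_inverse by blast
  hence "(H ** transpose H) $ a $ b = mat 1 $ a $ b" by simp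
  thus ?thesis by (simp add: H_def matrix_matrix_mult_def transpose_def mat_def)
qed

lemma parseval:
  fixes h :: "'n \<Rightarrow> real^'n"
  assumes orth: "\<And>i j. h i \<bullet> h j = (if i = j then 1 else 0)"
  shows "z \<bullet> y = (\<Sum>i\<in>UNIV. (h i \<bullet> z) * (h i \<bullet> y))"
proof -
  have "(h i \<bullet> z) * (h i \<bullet> y) = (\<Sum>a\<in>UNIV. \<Sum>b\<in>UNIV. z$a * y$b * (h i $ a * h i $ b))" for i
    unfolding inner_vec_def sum_product by (simp add: mult_ac)
  hence "(\<Sum>i\<in>UNIV. (h i \<bullet> z) * (h i \<bullet> y)) = (\<Sum>i\<in>UNIV. \<Sum>a\<in>UNIV. \<Sum>b\<in>UNIV. z$a * y$b * (h i $ a * h i $ b))"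
    by simp
  also have "\<dots> = (\<Sum>a\<in>UNIV. \<Sum>i\<in>UNIV. \<Sum>b\<in>UNIV. z$a * y$b * (h i $ a * h i $ b))"
    by (rule sum.swap)
  also have "\<dots> = (\<Sum>a\<in>UNIV. \<Sum>b\<in>UNIV. \<Sum>i\<in>UNIV. z$a * y$b * (h i $ a * h i $ b))"
    by (rule sum.cong[OF refl], rule sum.swap)
  also have "\<dots> = (\<Sum>a\<in>UNIV. \<Sum>b\<in>UNIV. z$a * y$b * (\<Sum>i\<in>UNIV. h i $ a * h i $ b))"
    by (simp add: sum_distrib_left)
  also have "\<dots> = (\<Sum>a\<in>UNIV. z$a * y$a)" by (simp add: orth_rows[OF orth] if_distrib cong: if_cong)
  finally show ?thesis by (simp add: inner_vec_def)
qed

lemma spectral_quad: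
  fixes S :: "real^'n^'n" and h :: "'n \<Rightarrow> real^'n"
  assumes sym: "\<And>i j. S$i$j = S$j$i"
    and orth: "\<And>i j. h i \<bullet> h j = (if i = j then 1 else 0)"
    and eig: "\<And>i. S *v h i = \<mu> i *\<^sub>R h i"
  shows "z \<bullet> (S *v y) = (\<Sum>i\<in>UNIV. \<mu> i * (h i \<bullet> z) * (h i \<bullet> y))"
proof -
  have "h i \<bullet> (S *v y) = \<mu> i * (h i \<bullet> y)" for i
    using sym_inner[OF sym, of "h i" y] eig[of i] by simp
  thus ?thesis using parseval[OF orth, of z "S *v y"] by (simp add: mult_ac)
qed


lemma poly_det: "poly (det (M :: real poly^'n^'n)) x = det (\<chi> i j. poly (M$i$j) x)"
  unfolding det_def by (simp add: poly_sum poly_prod)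

lemma charpoly_eval: "poly (charpoly A) x = det (mat x - A)"
  unfolding charpoly_def poly_det by (rule arg_cong[where f=det]) (simp add: vec_eq_iff mat_def)

lemma det_scale:
  fixes M :: "real^'n^'n"
  assumes c: "\<And>i. c i \<noteq> 0"
  shows "det (\<chi> u v. c u * M$u$v / c v) = det M"
proof -
  have "(\<Prod>i\<in>UNIV. c i * M$i$(p i) / c (p i)) = (\<Prod>i\<in>UNIV. M$i$(p i))" if p: "p permutes UNIV" for p
  proof -
    have "(\<Prod>i\<in>UNIV. c (p i)) = (\<Prod>i\<in>UNIV. c i)"
      using prod.permute[OF p, of c] by (simp add: comp_def)
    moreover have "(\<Prod>i\<in>UNIV. c i) \<noteq> 0" using c by simp
    ultimately show ?thesis by (simp add: prod.distrib prod_dividef)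
  qed
  thus ?thesis unfolding det_def by (intro sum.cong refl) auto
qed

lemma det_spectral:
  fixes S :: "real^'n^'n" and h :: "'n \<Rightarrow> real^'n"
  assumes sym: "\<And>i j. S$i$j = S$j$i"
    and orth: "\<And>i j. h i \<bullet> h j = (if i = j then 1 else 0)"
    and eig: "\<And>i. S *v h i = \<mu> i *\<^sub>R h i"
  shows "det (mat x - S) = (\<Prod>i\<in>UNIV. x - \<mu> i)"
proof -
  define H :: "real^'n^'n" where "H = (\<chi> u i. h i $ u)"
  define Dg :: "real^'n^'n" where "Dg = (\<chi> i j. if i = j then x - \<mu> i else 0)"
  have Suv: "S$u$v = (\<Sum>j\<in>UNIV. \<mu> j * h j $ u * h j $ v)" for u v
  proof -
    have "S$u$v = axis u 1 \<bullet> (S *v axis v 1)"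
      by (simp add: inner_axis') (simp add: matrix_vector_mult_def axis_def if_distrib cong: if_cong)
    also have "\<dots> = (\<Sum>j\<in>UNIV. \<mu> j * h j $ u * h j $ v)"
      by (simp add: spectral_quad[OF sym orth eig] inner_axis)
    finally show ?thesis .
  qed
  have "mat x - S = H ** Dg ** transpose H"
  proof -
    have "(mat x - S)$u$v = (H ** Dg ** transpose H)$u$v" for u v
    proof -
      have "(H ** Dg ** transpose H)$u$v = (\<Sum>j\<in>UNIV. (x - \<mu> j) * h j $ u * h j $ v)"
        by (simp add: H_def Dg_def matrix_matrix_mult_def transpose_def if_distrib mult_ac cong: if_cong)
      also have "\<dots> = x * (\<Sum>j\<in>UNIV. h j $ u * h j $ v) - (\<Sum>j\<in>UNIV. \<mu> j * h j $ u * h j $ v)"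
        by (simp add: algebra_simps sum_distrib_left sum_subtractf)
      also have "\<dots> = (mat x - S)$u$v"
        by (simp add: orth_rows[OF orth] Suv mat_def)
      finally show ?thesis by simp
    qed
    thus ?thesis by (simp add: vec_eq_iff)
  qed
  hence "det (mat x - S) = det H * det Dg * det (transpose H)" by (simp add: det_mul)
  also have "det Dg = (\<Prod>i\<in>UNIV. x - \<mu> i)" by (subst det_diagonal) (auto simp: Dg_def)
  also have "det H * det (transpose H) = 1"
  proof -
    have "H ** transpose H = mat 1"
      by (simp add: vec_eq_iff H_def matrix_matrix_mult_def transpose_def mat_def orth_rows[OF orth])
    hence "det (H ** transpose H) = 1" by simp
    thus ?thesis by (simp add: det_mul)
  qed
  ultimately show ?thesis by (simp add: mult_ac)
qed

lemma charpoly_spectral: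
  fixes S P :: "real^'n^'n" and h :: "'n \<Rightarrow> real^'n"
  assumes sym: "\<And>i j. S$i$j = S$j$i"
    and orth: "\<And>i j. h i \<bullet> h j = (if i = j then 1 else 0)"
    and eig: "\<And>i. S *v h i = \<mu> i *\<^sub>R h i"
    and c: "\<And>i. c i \<noteq> 0"
    and P: "\<And>u v. P$u$v = c u * S$u$v / c v"
  shows "charpoly P = (\<Prod>i\<in>UNIV. [:- \<mu> i, 1:])"
proof -
  have "poly (charpoly P) x = poly (\<Prod>i\<in>UNIV. [:- \<mu> i, 1:]) x" for x
  proof -
    have "mat x - P = (\<chi> u v. c u * (mat x - S)$u$v / c v)"
      using c by (simp add: vec_eq_iff P mat_def right_diff_distrib diff_divide_distrib)
    hence "det (mat x - P) = det (mat x - S)" using det_scale[where c=c and M="mat x - S", OF c] by simp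
    thus ?thesis by (simp add: charpoly_eval poly_prod det_spectral[OF sym orth eig])
  qed
  thus ?thesis using poly_eq_poly_eq_iff by blast
qed


lemma order_lin: "order l [:-a, 1:] = (if l = a then 1 else (0::nat))" for a l :: real
proof (cases "l = a")
  case True thus ?thesis using order_power_n_n[of a 1] by simp
next
  case False
  hence h: "poly [:-a, 1:] l \<noteq> 0" by simp
  show ?thesis using False order_0I[OF h] by simp
qed

lemma order_prod_lin:
  fixes \<mu> :: "'i \<Rightarrow> real"
  assumes "finite I"
  shows "order l (\<Prod>i\<in>I. [:-\<mu> i, 1:]) = card {i\<in>I. \<mu> i = l}"
  using assms
proof (induction I rule: finite_induct)
  case empty thus ?case by simp
next
  case (insert x F)
  have nz: "(\<Prod>i\<in>F. [:-\<mu> i, 1:]) \<noteq> 0" using insert by (simp add: prod_zero_iff)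
  have "order l (\<Prod>i\<in>insert x F. [:-\<mu> i, 1:]) = order l [:-\<mu> x, 1:] + order l (\<Prod>i\<in>F. [:-\<mu> i, 1:])"
  proof -
    have nz2: "[:-\<mu> x, 1:] * (\<Prod>i\<in>F. [:-\<mu> i, 1:]) \<noteq> 0"
      using nz by (metis mult_eq_0_iff pCons_eq_0_iff one_neq_zero)
    show ?thesis by (subst prod.insert[OF insert(1,2)], rule order_mult[OF nz2])
  qed
  also have "\<dots> = (if l = \<mu> x then 1 else 0) + card {i\<in>F. \<mu> i = l}" using insert by (simp add: order_lin)
  also have "\<dots> = card {i\<in>insert x F. \<mu> i = l}"
  proof (cases "\<mu> x = l")
    case True
    hence "{i\<in>insert x F. \<mu> i = l} = insert x {i\<in>F. \<mu> i = l}" by auto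
    thus ?thesis using insert True by simp
  next
    case False
    hence "{i\<in>insert x F. \<mu> i = l} = {i\<in>F. \<mu> i = l}" by auto
    thus ?thesis using False by simp
  qed
  finally show ?case .
qed

lemma second_eig_set:
  fixes A :: "real^'n^'n" and \<mu> :: "'n \<Rightarrow> real"
  assumes cp: "charpoly A = (\<Prod>i\<in>UNIV. [:-\<mu> i, 1:])"
  shows "{l. poly (charpoly A) l = 0 \<and>
      2 \<le> (\<Sum>m\<in>{m. poly (charpoly A) m = 0 \<and> l \<le> m}. order m (charpoly A))}
     = {l\<in>range \<mu>. 2 \<le> card {i. l \<le> \<mu> i}}"
proof -
  have root: "poly (charpoly A) l = 0 \<longleftrightarrow> l \<in> range \<mu>" for l
    by (auto simp: cp poly_prod prod_zero_iff)
  have ord: "order m (charpoly A) = card {i. \<mu> i = m}" for m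
    unfolding cp by (simp add: order_prod_lin)
  have sum: "(\<Sum>m\<in>{m\<in>range \<mu>. l \<le> m}. order m (charpoly A)) = card {i. l \<le> \<mu> i}" for l
  proof -
    have "(\<Sum>m\<in>{m\<in>range \<mu>. l \<le> m}. \<Sum>i\<in>{i\<in>{i. l \<le> \<mu> i}. \<mu> i = m}. 1::nat) = (\<Sum>i\<in>{i. l \<le> \<mu> i}. 1)"
      by (rule sum.group) auto
    hence "(\<Sum>m\<in>{m\<in>range \<mu>. l \<le> m}. card {i\<in>{i. l \<le> \<mu> i}. \<mu> i = m}) = card {i. l \<le> \<mu> i}"
      by simp
    moreover have "(\<Sum>m\<in>{m\<in>range \<mu>. l \<le> m}. card {i\<in>{i. l \<le> \<mu> i}. \<mu> i = m}) =
        (\<Sum>m\<in>{m\<in>range \<mu>. l \<le> m}. card {i. \<mu> i = m})"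
      by (intro sum.cong refl arg_cong[where f=card]) auto
    ultimately show ?thesis by (simp add: ord)
  qed
  show ?thesis by (simp add: sum root)
qed

lemma second_eig:
  fixes A :: "real^'n^'n" and \<mu> :: "'n \<Rightarrow> real"
  assumes cp: "charpoly A = (\<Prod>i\<in>UNIV. [:-\<mu> i, 1:])" and n2: "CARD('n) \<ge> 2"
  shows "\<exists>i j. i \<noteq> j \<and> second_eigenvalue A \<le> \<mu> i \<and> second_eigenvalue A \<le> \<mu> j"
    and "i \<noteq> j \<Longrightarrow> min (\<mu> i) (\<mu> j) \<le> second_eigenvalue A"
proof -
  define T where "T = {l\<in>range \<mu>. 2 \<le> card {i. l \<le> \<mu> i}}"
  have se: "second_eigenvalue A = Max T"
    unfolding second_eigenvalue_def second_eig_set[OF cp] T_def ..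
  have fT: "finite T" unfolding T_def by simp
  have "Min (range \<mu>) \<in> T"
  proof -
    have "{i. Min (range \<mu>) \<le> \<mu> i} = UNIV" by auto
    thus ?thesis using n2 by (simp add: T_def)
  qed
  hence "T \<noteq> {}" by auto
  hence "Max T \<in> T" using fT by simp
  hence "2 \<le> card {i. Max T \<le> \<mu> i}" by (simp add: T_def)
  hence "\<not> card {i. Max T \<le> \<mu> i} \<le> Suc 0" by simp
  then obtain a b where "a \<in> {i. Max T \<le> \<mu> i}" "b \<in> {i. Max T \<le> \<mu> i}" "a \<noteq> b"
    using card_le_Suc0_iff_eq[of "{i. Max T \<le> \<mu> i}"] by auto
  thus "\<exists>i j. i \<noteq> j \<and> second_eigenvalue A \<le> \<mu> i \<and> second_eigenvalue A \<le> \<mu> j"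
    unfolding se by auto
  assume ij: "i \<noteq> j"
  have "min (\<mu> i) (\<mu> j) \<in> T"
  proof -
    have "{i, j} \<subseteq> {k. min (\<mu> i) (\<mu> j) \<le> \<mu> k}" by auto
    hence "card {i, j} \<le> card {k. min (\<mu> i) (\<mu> j) \<le> \<mu> k}" by (intro card_mono) auto
    moreover have "min (\<mu> i) (\<mu> j) \<in> range \<mu>" by (simp add: min_def)
    ultimately show ?thesis using ij by (simp add: T_def)
  qed
  thus "min (\<mu> i) (\<mu> j) \<le> second_eigenvalue A" unfolding se using fT by simp
qed


lemma wdeg_pos:
  fixes w :: "'a::finite \<Rightarrow> 'a \<Rightarrow> real"
  assumes nw: "network w" and n2: "CARD('a) \<ge> 2"
  shows "wdeg w u > 0"
proof -
  obtain x :: 'a where xu: "x \<noteq> u"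
  proof -
    have "\<not> (\<forall>x::'a. x = u)"
    proof
      assume "\<forall>x::'a. x = u"
      hence "(UNIV::'a set) = {u}" by auto
      hence "card (UNIV::'a set) = card {u}" by (simp only:)
      thus False using n2 by simp
    qed
    thus ?thesis using that by auto
  qed
  have "(\<lambda>a b. a \<noteq> b \<and> 0 < w a b)\<^sup>*\<^sup>* u x" using nw by (simp add: network_def)
  then obtain y where "0 < w u y"
    using xu by (cases rule: converse_rtranclpE) auto
  moreover have "w u y \<le> wdeg w u"
    unfolding wdeg_def using nw by (intro member_le_sum) (auto simp: network_def)
  ultimately show ?thesis by simp
qed

lemma network_spectral:
  fixes w :: "'a::finite \<Rightarrow> 'a \<Rightarrow> real"
  assumes sym: "\<And>u x. w u x = w x u" and pos: "\<And>u. wdeg w u > 0"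
  obtains \<mu> :: "'a \<Rightarrow> real" and e :: "'a \<Rightarrow> 'a \<Rightarrow> real" where
   "charpoly (trans_mat w) = (\<Prod>i\<in>UNIV. [:-\<mu> i, 1:])"
   "\<And>i j. (\<Sum>u\<in>UNIV. wdeg w u * e i u * e j u) = (if i = j then 1 else 0)"
   "\<And>g. (\<Sum>u\<in>UNIV. \<Sum>x\<in>UNIV. w u x * g u * g x) = (\<Sum>i\<in>UNIV. \<mu> i * (\<Sum>u\<in>UNIV. wdeg w u * e i u * g u)^2)"
   "\<And>g. (\<Sum>u\<in>UNIV. wdeg w u * (g u)^2) = (\<Sum>i\<in>UNIV. (\<Sum>u\<in>UNIV. wdeg w u * e i u * g u)^2)"
proof -
  define s where "s u = sqrt (wdeg w u)" for u
  have sp: "s u > 0" for u using pos[of u] by (simp add: s_def)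
  have ss: "s u * s u = wdeg w u" for u using pos[of u] by (simp add: s_def)
  have dnz: "wdeg w u \<noteq> 0" for u using pos[of u] by simp
  have snz: "s u \<noteq> 0" for u using sp[of u] by simp
  define S :: "real^'a^'a" where "S = (\<chi> u x. w u x / (s u * s x))"
  have Ssym: "S$i$j = S$j$i" for i j by (simp add: S_def sym mult.commute)
  obtain h :: "'a \<Rightarrow> real^'a" and \<mu> where orth: "\<And>i j. h i \<bullet> h j = (if i = j then 1 else 0)"
    and eig: "\<And>i. S *v h i = \<mu> i *\<^sub>R h i"
    using spectral[OF Ssym] by blast
  define e where "e i u = h i $ u / s u" for i u
  have c1: "charpoly (trans_mat w) = (\<Prod>i\<in>UNIV. [:-\<mu> i, 1:])"
  proof (rule charpoly_spectral[OF Ssym orth eig, where c = "\<lambda>u. 1 / s u"])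
    show "1 / s i \<noteq> 0" for i using sp[of i] by simp
    show "trans_mat w $ u $ v = 1 / s u * S $ u $ v / (1 / s v)" for u v
      using sp[of u] sp[of v] ss[of u] by (simp add: trans_mat_def S_def field_simps)
  qed
  have c2: "(\<Sum>u\<in>UNIV. wdeg w u * e i u * e j u) = (if i = j then 1 else 0)" for i j
  proof -
    have "(\<Sum>u\<in>UNIV. wdeg w u * e i u * e j u) = (\<Sum>u\<in>UNIV. h i $ u * h j $ u)"
      by (intro sum.cong refl) (use sp ss dnz in \<open>simp add: e_def field_simps\<close>)
    thus ?thesis using orth[of i j] by (simp add: inner_vec_def)
  qed
  have phi: "(\<Sum>u\<in>UNIV. wdeg w u * e i u * g u) = h i \<bullet> (\<chi> u. s u * g u)" for i g
    unfolding inner_vec_def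
    by (intro sum.cong refl) (use sp in \<open>simp add: e_def ss[symmetric] field_simps\<close>)
  have c3: "(\<Sum>u\<in>UNIV. \<Sum>x\<in>UNIV. w u x * g u * g x) = (\<Sum>i\<in>UNIV. \<mu> i * (\<Sum>u\<in>UNIV. wdeg w u * e i u * g u)^2)" for g
  proof -
    let ?y = "(\<chi> u. s u * g u) :: real^'a"
    have "(\<Sum>u\<in>UNIV. \<Sum>x\<in>UNIV. w u x * g u * g x) = ?y \<bullet> (S *v ?y)"
      unfolding inner_vec_def matrix_vector_mult_def S_def
      by (simp add: sum_distrib_left) (intro sum.cong refl, simp add: snz field_simps)
    also have "\<dots> = (\<Sum>i\<in>UNIV. \<mu> i * (h i \<bullet> ?y) * (h i \<bullet> ?y))" by (rule spectral_quad[OF Ssym orth eig])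
    finally show ?thesis unfolding phi power2_eq_square by (simp only: mult.assoc)
  qed
  have c4: "(\<Sum>u\<in>UNIV. wdeg w u * (g u)^2) = (\<Sum>i\<in>UNIV. (\<Sum>u\<in>UNIV. wdeg w u * e i u * g u)^2)" for g
  proof -
    let ?y = "(\<chi> u. s u * g u) :: real^'a"
    have "(\<Sum>u\<in>UNIV. wdeg w u * (g u)^2) = ?y \<bullet> ?y"
      unfolding inner_vec_def by (intro sum.cong refl) (simp add: ss[symmetric] power2_eq_square mult_ac)
    also have "\<dots> = (\<Sum>i\<in>UNIV. (h i \<bullet> ?y) * (h i \<bullet> ?y))" by (rule parseval[OF orth])
    finally show ?thesis by (simp only: phi power2_eq_square)
  qed
  show ?thesis using that[OF c1 c2 c3 c4] .
qed


lemma rayleigh_le: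
  fixes w :: "'a::finite \<Rightarrow> 'a \<Rightarrow> real"
  assumes sym: "\<And>u x. w u x = w x u" and nn: "\<And>u x. 0 \<le> w u x"
  shows "(\<Sum>u\<in>UNIV. \<Sum>x\<in>UNIV. w u x * g u * g x) \<le> (\<Sum>u\<in>UNIV. wdeg w u * (g u)^2)"
proof -
  have "(\<Sum>u\<in>UNIV. \<Sum>x\<in>UNIV. w u x * g u * g x) \<le>
        (\<Sum>u\<in>UNIV. \<Sum>x\<in>UNIV. w u x * ((g u)^2 + (g x)^2) / 2)"
  proof (intro sum_mono)
    fix u x
    have "2 * (g u * g x) \<le> (g u)^2 + (g x)^2" using sum_squares_bound[of "g u" "g x"] by simp
    hence "w u x * (2 * (g u * g x)) \<le> w u x * ((g u)^2 + (g x)^2)" using nn by (rule mult_left_mono)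
    thus "w u x * g u * g x \<le> w u x * ((g u)^2 + (g x)^2) / 2" by (simp add: algebra_simps)
  qed
  also have "\<dots> = ((\<Sum>u\<in>UNIV. \<Sum>x\<in>UNIV. w u x * (g u)^2) + (\<Sum>u\<in>UNIV. \<Sum>x\<in>UNIV. w u x * (g x)^2)) / 2"
    by (simp add: sum_divide_distrib sum.distrib algebra_simps add_divide_distrib)
  also have "(\<Sum>u\<in>UNIV. \<Sum>x\<in>UNIV. w u x * (g x)^2) = (\<Sum>u\<in>UNIV. \<Sum>x\<in>UNIV. w u x * (g u)^2)"
    by (subst sum.swap) (simp add: sym)
  also have "(\<Sum>u\<in>UNIV. \<Sum>x\<in>UNIV. w u x * (g u)^2) = (\<Sum>u\<in>UNIV. wdeg w u * (g u)^2)"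
    by (simp add: wdeg_def sum_distrib_right)
  finally show ?thesis by simp
qed

theorem claim2p7:
  fixes w0 w1 :: "'a::finite \<Rightarrow> 'a \<Rightarrow> real" and v :: 'a
  assumes "CARD('a) \<ge> 2"
    and "network w0" and "network w1"
    and "w0 v v < w1 v v"
    and "\<forall>u x. (u, x) \<noteq> (v, v) \<longrightarrow> w0 u x = w1 u x"
  shows "spectral_gap w1 \<le> spectral_gap w0"
proof -
  note n2 = assms(1)
  have sym0: "\<And>u x. w0 u x = w0 x u" and nn0: "\<And>u x. 0 \<le> w0 u x"
    using assms(2) by (auto simp: network_def)
  have sym1: "\<And>u x. w1 u x = w1 x u" and nn1: "\<And>u x. 0 \<le> w1 u x"
    using assms(3) by (auto simp: network_def)
  have pos0: "\<And>u. wdeg w0 u > 0" using wdeg_pos[OF assms(2) n2] .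
  have pos1: "\<And>u. wdeg w1 u > 0" using wdeg_pos[OF assms(3) n2] .
  define t where "t = w1 v v - w0 v v"
  have tp: "t > 0" using assms(4) by (simp add: t_def)
  have wrel: "w1 u x = w0 u x + (if u = v \<and> x = v then t else 0)" for u x
    using assms(5) by (auto simp: t_def)
  have wd: "wdeg w1 u = wdeg w0 u + (if u = v then t else 0)" for u
    by (simp add: wdeg_def wrel sum.distrib)
  define Q where "Q w g = (\<Sum>u\<in>UNIV. \<Sum>x\<in>UNIV. w u x * g u * g x)" for w :: "'a \<Rightarrow> 'a \<Rightarrow> real" and g :: "'a \<Rightarrow> real"
  define D where "D w g = (\<Sum>u\<in>UNIV. wdeg w u * (g u)^2)" for w :: "'a \<Rightarrow> 'a \<Rightarrow> real" and g :: "'a \<Rightarrow> real"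
  have inner: "(\<Sum>x\<in>UNIV. if u = v \<and> x = v then c else 0) = (if u = v then c else (0::real))" for u c
    by (cases "u = v") auto
  have Q1: "Q w1 g = Q w0 g + t * (g v)^2" for g
  proof -
    have tm: "w1 u x * g u * g x = w0 u x * g u * g x + (if u = v \<and> x = v then t * (g v)^2 else 0)" for u x
      by (cases "u = v \<and> x = v") (auto simp: wrel power2_eq_square algebra_simps)
    show ?thesis by (simp add: Q_def tm sum.distrib inner)
  qed
  have D1: "D w1 g = D w0 g + t * (g v)^2" for g
  proof -
    have tm: "wdeg w1 u * (g u)^2 = wdeg w0 u * (g u)^2 + (if u = v then t * (g v)^2 else 0)" for u
      by (cases "u = v") (auto simp: wd algebra_simps)
    show ?thesis by (simp add: D_def tm sum.distrib)
  qed
  obtain \<mu>0 :: "'a \<Rightarrow> real" and e0 :: "'a \<Rightarrow> 'a \<Rightarrow> real" where cp0: "charpoly (trans_mat w0) = (\<Prod>i\<in>UNIV. [:-\<mu>0 i, 1:])"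
    and on0: "\<And>i j. (\<Sum>u\<in>UNIV. wdeg w0 u * e0 i u * e0 j u) = (if i = j then 1 else 0)"
    and q0': "\<And>g. (\<Sum>u\<in>UNIV. \<Sum>x\<in>UNIV. w0 u x * g u * g x) = (\<Sum>i\<in>UNIV. \<mu>0 i * (\<Sum>u\<in>UNIV. wdeg w0 u * e0 i u * g u)^2)"
    and d0': "\<And>g. (\<Sum>u\<in>UNIV. wdeg w0 u * (g u)^2) = (\<Sum>i\<in>UNIV. (\<Sum>u\<in>UNIV. wdeg w0 u * e0 i u * g u)^2)"
    by (rule network_spectral[OF sym0 pos0], rule that)
  have q0: "\<And>g. Q w0 g = (\<Sum>i\<in>UNIV. \<mu>0 i * (\<Sum>u\<in>UNIV. wdeg w0 u * e0 i u * g u)^2)"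
    unfolding Q_def by (rule q0')
  have d0: "\<And>g. D w0 g = (\<Sum>i\<in>UNIV. (\<Sum>u\<in>UNIV. wdeg w0 u * e0 i u * g u)^2)"
    unfolding D_def by (rule d0')
  obtain \<mu>1 :: "'a \<Rightarrow> real" and e1 :: "'a \<Rightarrow> 'a \<Rightarrow> real" where cp1: "charpoly (trans_mat w1) = (\<Prod>i\<in>UNIV. [:-\<mu>1 i, 1:])"
    and q1': "\<And>g. (\<Sum>u\<in>UNIV. \<Sum>x\<in>UNIV. w1 u x * g u * g x) = (\<Sum>i\<in>UNIV. \<mu>1 i * (\<Sum>u\<in>UNIV. wdeg w1 u * e1 i u * g u)^2)"
    and d1': "\<And>g. (\<Sum>u\<in>UNIV. wdeg w1 u * (g u)^2) = (\<Sum>i\<in>UNIV. (\<Sum>u\<in>UNIV. wdeg w1 u * e1 i u * g u)^2)"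
    by (rule network_spectral[OF sym1 pos1], rule that)
  have q1: "\<And>g. Q w1 g = (\<Sum>i\<in>UNIV. \<mu>1 i * (\<Sum>u\<in>UNIV. wdeg w1 u * e1 i u * g u)^2)"
    unfolding Q_def by (rule q1')
  have d1: "\<And>g. D w1 g = (\<Sum>i\<in>UNIV. (\<Sum>u\<in>UNIV. wdeg w1 u * e1 i u * g u)^2)"
    unfolding D_def by (rule d1')
  define l0 where "l0 = second_eigenvalue (trans_mat w0)"
  obtain i j where ij: "i \<noteq> j" and li: "l0 \<le> \<mu>0 i" and lj: "l0 \<le> \<mu>0 j"
    using second_eig(1)[OF cp0 n2] unfolding l0_def by blast
  define \<phi>0 where "\<phi>0 k g = (\<Sum>u\<in>UNIV. wdeg w0 u * e0 k u * g u)" for k g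
  define \<phi>1 where "\<phi>1 k g = (\<Sum>u\<in>UNIV. wdeg w1 u * e1 k u * g u)" for k g
  have phi0_lin: "\<phi>0 k (\<lambda>u. a * e0 i u + b * e0 j u) = a * (if k = i then 1 else 0) + b * (if k = j then 1 else 0)" for k a b
  proof -
    have "\<phi>0 k (\<lambda>u. a * e0 i u + b * e0 j u) = a * (\<Sum>u\<in>UNIV. wdeg w0 u * e0 k u * e0 i u) + b * (\<Sum>u\<in>UNIV. wdeg w0 u * e0 k u * e0 j u)"
      by (simp add: \<phi>0_def sum_distrib_left sum.distrib algebra_simps)
    thus ?thesis by (simp add: on0)
  qed
  have sq: "(a * (if k = i then 1 else 0) + b * (if k = j then 1 else 0))^2 =
      (if k = i then a^2 else 0) + (if k = j then b^2 else (0::real))" for k a b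
    using ij by auto
  have D0g: "D w0 (\<lambda>u. a * e0 i u + b * e0 j u) = a^2 + b^2" for a b
    by (simp add: d0[folded \<phi>0_def] phi0_lin sq sum.distrib)
  have Q0g: "Q w0 (\<lambda>u. a * e0 i u + b * e0 j u) = \<mu>0 i * a^2 + \<mu>0 j * b^2" for a b
  proof -
    have "Q w0 (\<lambda>u. a * e0 i u + b * e0 j u) = (\<Sum>k\<in>UNIV. (if k = i then \<mu>0 i * a^2 else 0) + (if k = j then \<mu>0 j * b^2 else 0))"
      unfolding q0[folded \<phi>0_def] phi0_lin sq by (intro sum.cong refl) (auto simp: algebra_simps)
    thus ?thesis by (simp add: sum.distrib)
  qed
  have l01: "l0 \<le> 1"
  proof -
    have r: "Q w0 (\<lambda>u. 1 * e0 i u + 0 * e0 j u) \<le> D w0 (\<lambda>u. 1 * e0 i u + 0 * e0 j u)"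
      unfolding Q_def D_def by (rule rayleigh_le[OF sym0 nn0])
    have a: "Q w0 (\<lambda>u. 1 * e0 i u + 0 * e0 j u) = \<mu>0 i" using Q0g[of 1 0] by simp
    have b: "D w0 (\<lambda>u. 1 * e0 i u + 0 * e0 j u) = 1" using D0g[of 1 0] by simp
    show ?thesis using r a b li by linarith
  qed
  show ?thesis
  proof (rule ccontr)
    assume "\<not> ?thesis"
    hence lt: "second_eigenvalue (trans_mat w1) < l0" unfolding spectral_gap_def l0_def by simp
    have uniq: "a = b" if "l0 \<le> \<mu>1 a" "l0 \<le> \<mu>1 b" for a b
    proof (rule ccontr)
      assume "a \<noteq> b"
      from second_eig(2)[OF cp1 n2 this] that lt show False by linarith
    qed
    obtain a b where ab: "(a, b) \<noteq> (0, 0)"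
      and orth1: "\<And>m. l0 \<le> \<mu>1 m \<Longrightarrow> \<phi>1 m (\<lambda>u. a * e0 i u + b * e0 j u) = 0"
    proof (cases "\<exists>k. l0 \<le> \<mu>1 k")
      case False thus ?thesis using that[of 1 0] by auto
    next
      case True
      then obtain k where k: "l0 \<le> \<mu>1 k" by blast
      define p where "p = \<phi>1 k (e0 i)"
      define q where "q = \<phi>1 k (e0 j)"
      have lin1: "\<phi>1 k (\<lambda>u. a * e0 i u + b * e0 j u) = a * p + b * q" for a b
        by (simp add: \<phi>1_def p_def q_def sum_distrib_left sum.distrib algebra_simps)
      show ?thesis
      proof (cases "p = 0 \<and> q = 0")
        case True
        show ?thesis
        proof (rule that[of 1 0])
          show "(1::real, 0::real) \<noteq> (0, 0)" by simp
          fix m assume "l0 \<le> \<mu>1 m"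
          hence "m = k" using uniq k by blast
          thus "\<phi>1 m (\<lambda>u. 1 * e0 i u + 0 * e0 j u) = 0" using lin1[of 1 0] True by simp
        qed
      next
        case False
        show ?thesis
        proof (rule that[of q "-p"])
          show "(q, -p) \<noteq> (0, 0)" using False by auto
          fix m assume "l0 \<le> \<mu>1 m"
          hence "m = k" using uniq k by blast
          thus "\<phi>1 m (\<lambda>u. q * e0 i u + - p * e0 j u) = 0" using lin1[of q "-p"] by (simp add: algebra_simps)
        qed
      qed
    qed
    define g where "g = (\<lambda>u. a * e0 i u + b * e0 j u)"
    have D0pos: "D w0 g > 0" using ab unfolding g_def D0g
      by (auto simp: add_pos_nonneg add_nonneg_pos)
    have "Q w1 g - l0 * D w1 g \<ge> 0"
    proof -
      have "Q w0 g - l0 * D w0 g = (\<mu>0 i - l0) * a^2 + (\<mu>0 j - l0) * b^2"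
        unfolding g_def Q0g D0g by (simp add: algebra_simps)
      also have "\<dots> \<ge> 0" using li lj by (intro add_nonneg_nonneg mult_nonneg_nonneg) auto
      finally have "Q w0 g - l0 * D w0 g \<ge> 0" .
      moreover have "t * (1 - l0) * (g v)^2 \<ge> 0" using tp l01 by simp
      ultimately show ?thesis unfolding Q1 D1 by (simp add: algebra_simps)
    qed
    moreover have "Q w1 g - l0 * D w1 g < 0"
    proof -
      have "D w1 g > 0" using D0pos D1[of g] tp by (simp add: add_pos_nonneg)
      hence "(\<Sum>m\<in>UNIV. (\<phi>1 m g)^2) > 0" using d1[folded \<phi>1_def] by simp
      have "\<exists>m. \<phi>1 m g \<noteq> 0"
      proof (rule ccontr)
        assume "\<not> (\<exists>m. \<phi>1 m g \<noteq> 0)"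
        hence "(\<Sum>m\<in>UNIV. (\<phi>1 m g)^2) = 0" by simp
        thus False using \<open>(\<Sum>m\<in>UNIV. (\<phi>1 m g)^2) > 0\<close> by simp
      qed
      then obtain m where m: "\<phi>1 m g \<noteq> 0" by blast
      hence ml: "\<mu>1 m < l0" using orth1[of m] unfolding g_def by force
      have eq: "Q w1 g - l0 * D w1 g = (\<Sum>k\<in>UNIV. (\<mu>1 k - l0) * (\<phi>1 k g)^2)"
        by (simp add: q1[folded \<phi>1_def] d1[folded \<phi>1_def] sum_subtractf sum_distrib_left algebra_simps)
      have nonpos: "(\<mu>1 k - l0) * (\<phi>1 k g)^2 \<le> 0" for k
      proof (cases "l0 \<le> \<mu>1 k")
        case True thus ?thesis using orth1[of k] unfolding g_def by simp
      next
        case False thus ?thesis by (simp add: mult_nonpos_nonneg)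
      qed
      have neg: "(\<mu>1 m - l0) * (\<phi>1 m g)^2 < 0" using ml m by (simp add: mult_neg_pos)
      have "(\<Sum>k\<in>UNIV. (\<mu>1 k - l0) * (\<phi>1 k g)^2) = (\<mu>1 m - l0) * (\<phi>1 m g)^2 + (\<Sum>k\<in>UNIV - {m}. (\<mu>1 k - l0) * (\<phi>1 k g)^2)"
        by (simp add: sum.remove)
      also have "\<dots> < 0" using neg sum_nonpos[of "UNIV - {m}" "\<lambda>k. (\<mu>1 k - l0) * (\<phi>1 k g)^2"] nonpos
        by (simp add: add_neg_nonpos)
      finally show ?thesis using eq by simp
    qed
    ultimately show False by simp
  qed
qed

end
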